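(* Let $k,t\ge 2$ be integers and $1\le r\le t$. For $|q|<1$, \[ \sum_{n \geq 0} D_k^\times(r,t;n)q^n = \frac{(q^k;q^k)_\infty}{(q;q)_\infty}\sum_{\substack{m\ge 1,\ k \nmid m \\ m \equiv r \pmod t}} \frac{q^m}{1 - q^m}, \] and if $\gcd(k,t) = 1$ then \[ \sum_{n \geq 0} D_k^\times(r,t;n)q^n = \frac{(q^k;q^k)_\infty}{(q;q)_\infty}\left(\sum_{\substack{m\ge1\\ m \equiv r \pmod t}} \frac{q^m}{1 - q^m} - \sum_{\substack{m\ge 1\\ m \equiv \bar{r} \pmod t}} \frac{q^{mk}}{1 - q^{mk}}\right), \] where $1 \leq \bar{r} \leq t$ is the representative of $rk^{-1} \pmod t$.
   Context: A partition of $n$ is $k$-indivisible if none of its parts is divisible by $k$. $D_k^\times(r,t;n)$ denotes the total number of parts congruent to $r$ modulo $t$, counted with multiplicity over all $k$-indivisible partitions of $n$. $(a;q)_\infty \coloneqq \prod_{n\ge1}(1-aq^{n-1})$. *)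

theory Defs
  imports "HOL-Analysis.Analysis" "HOL-Library.Multiset" "HOL-Number_Theory.Cong"
begin

definition partitions :: "nat \<Rightarrow> nat multiset set" where
  "partitions n = {M. (\<forall>x\<in>#M. 0 < x) \<and> sum_mset M = n}"

definition k_indivisible :: "nat \<Rightarrow> nat multiset \<Rightarrow> bool" where
  "k_indivisible k M \<longleftrightarrow> (\<forall>x\<in>#M. \<not> k dvd x)"

definition Dx :: "nat \<Rightarrow> nat \<Rightarrow> nat \<Rightarrow> nat \<Rightarrow> nat" where
  "Dx k r t n = (\<Sum>M\<in>{M\<in>partitions n. k_indivisible k M}.
                    size (filter_mset (\<lambda>x. [x = r] (mod t)) M))"

definition qpoch_inf :: "complex \<Rightarrow> complex \<Rightarrow> complex" where
  "qpoch_inf a q = (\<Prod>n. 1 - a * q ^ n)"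

end

theory Submission
  imports Defs
begin

lemma size_le_sum_mset: "(\<forall>x\<in>#M. 0 < (x::nat)) \<Longrightarrow> size M \<le> sum_mset M"
  by (induction M) auto

lemma mem_le_sum_mset: "(x::nat) \<in># M \<Longrightarrow> x \<le> sum_mset M"
  by (induction M) auto

lemma finite_msets_sum:
  assumes "0 \<notin> A"
  shows "finite {M. set_mset M \<subseteq> A \<and> sum_mset M = (n::nat)}"
proof (rule finite_subset)
  show "{M. set_mset M \<subseteq> A \<and> sum_mset M = n} \<subseteq> (\<Union>s\<in>{..n}. multisets_of_size {1..n} s)"
  proof
    fix M assume M: "M \<in> {M. set_mset M \<subseteq> A \<and> sum_mset M = n}"
    then have pos: "\<forall>x\<in>#M. 0 < x" using assms by (metis gr0I mem_Collect_eq subsetD)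
    have "size M \<le> n" using size_le_sum_mset[OF pos] M by auto
    moreover have "set_mset M \<subseteq> {1..n}" using M pos mem_le_sum_mset
      by (auto simp: Suc_le_eq)
    ultimately show "M \<in> (\<Union>s\<in>{..n}. multisets_of_size {1..n} s)"
      by (auto simp: multisets_of_size_def)
  qed
qed auto

definition pA :: "nat set \<Rightarrow> nat \<Rightarrow> nat" where
  "pA A n = card {M. set_mset M \<subseteq> A \<and> sum_mset M = n}"

lemma pA_insert:
  assumes "finite A" "0 \<notin> A" "a \<notin> A" "0 < a"
  shows "pA (insert a A) n = (\<Sum>j\<le>n div a. pA A (n - j * a))"
proof -
  define S where "S j = {N. set_mset N \<subseteq> A \<and> sum_mset N = n - j * a}" for j
  have eq: "{M. set_mset M \<subseteq> insert a A \<and> sum_mset M = n} =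
        (\<Union>j\<in>{..n div a}. (\<lambda>N. N + replicate_mset j a) ` S j)"
  proof (intro equalityI subsetI)
    fix M assume M: "M \<in> {M. set_mset M \<subseteq> insert a A \<and> sum_mset M = n}"
    define j where "j = count M a"
    define N where "N = filter_mset (\<lambda>x. x \<noteq> a) M"
    have MN: "M = N + replicate_mset j a"
      unfolding N_def j_def by (auto simp: multiset_eq_iff)
    have sN: "set_mset N \<subseteq> A" using M unfolding N_def by auto
    have "sum_mset M = sum_mset N + j * a" using MN by simp
    then have "j * a \<le> n" "sum_mset N = n - j * a" using M by auto
    then have "j \<le> n div a" using assms(4) by (simp add: less_eq_div_iff_mult_less_eq)
    then show "M \<in> (\<Union>j\<in>{..n div a}. (\<lambda>N. N + replicate_mset j a) ` S j)"
      using MN sN \<open>sum_mset N = n - j * a\<close> unfolding S_def by blast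
  next
    fix M assume "M \<in> (\<Union>j\<in>{..n div a}. (\<lambda>N. N + replicate_mset j a) ` S j)"
    then obtain j N where j: "j \<le> n div a" and N: "N \<in> S j" and M: "M = N + replicate_mset j a"
      by auto
    have "j * a \<le> n" using j assms(4) by (simp add: less_eq_div_iff_mult_less_eq)
    then show "M \<in> {M. set_mset M \<subseteq> insert a A \<and> sum_mset M = n}"
      using N M unfolding S_def by auto
  qed
  have finS: "finite (S j)" for j unfolding S_def using finite_msets_sum[OF assms(2)] .
  have inj: "inj_on (\<lambda>N. N + replicate_mset j a) (S j)" for j
    by (auto intro!: inj_onI)
  have disj: "((\<lambda>N. N + replicate_mset i a) ` S i) \<inter> ((\<lambda>N. N + replicate_mset j a) ` S j) = {}"
    if "i \<noteq> j" for i j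
  proof -
    have "count N a = 0" if "N \<in> S l" for N l using that assms(3) unfolding S_def
      by (auto simp: count_eq_zero_iff)
    then show ?thesis using that by (auto dest!: arg_cong[where f="\<lambda>M. count M a"])
  qed
  have "pA (insert a A) n = card (\<Union>j\<in>{..n div a}. (\<lambda>N. N + replicate_mset j a) ` S j)"
    unfolding pA_def eq ..
  also have "\<dots> = (\<Sum>j\<le>n div a. card ((\<lambda>N. N + replicate_mset j a) ` S j))"
    by (rule card_UN_disjoint) (use finS disj in auto)
  also have "\<dots> = (\<Sum>j\<le>n div a. pA A (n - j * a))"
  proof (rule sum.cong)
    fix j show "card ((\<lambda>N. N + replicate_mset j a) ` S j) = pA A (n - j * a)"
      using card_image[OF inj[of j]] unfolding pA_def S_def by simp
  qed simp
  finally show ?thesis .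
qed

lemma geom_mult_sums:
  fixes q :: "'a::{real_normed_field,banach}"
  assumes "norm q < 1" "0 < a"
  shows "(\<lambda>n. if a dvd n then q ^ n else 0) sums (1 / (1 - q ^ a))"
proof -
  have nq: "norm (q ^ a) < 1"
    using assms by (simp add: norm_power power_less_one_iff) 
  have "(\<lambda>j. (q ^ a) ^ j) sums (1 / (1 - q ^ a))"
    using geometric_sums[OF nq] by simp
  moreover have "(\<lambda>j. (\<lambda>n. if a dvd n then q ^ n else 0) (j * a)) = (\<lambda>j. (q ^ a) ^ j)"
    by (simp add: fun_eq_iff mult.commute flip: power_mult)
  ultimately have "(\<lambda>j. (\<lambda>n. if a dvd n then q ^ n else 0) (j * a)) sums (1 / (1 - q ^ a))"
    by simp
  moreover have "strict_mono (\<lambda>j::nat. j * a)" using assms(2) by (auto intro: strict_monoI)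
  ultimately show ?thesis
    by (subst (asm) sums_mono_reindex) (auto simp: dvd_def mult.commute)
qed

lemma pA_step:
  fixes q :: "'a::{real_normed_field,banach}"
  assumes "finite A" "0 \<notin> A" "a \<notin> A" "0 < a" "norm q < 1"
    and s: "(\<lambda>n. of_nat (pA A n) * q ^ n) sums s"
    and ns: "summable (\<lambda>n. real (pA A n) * norm q ^ n)"
  shows "(\<lambda>n. of_nat (pA (insert a A) n) * q ^ n) sums (s * (1 / (1 - q ^ a)))"
proof -
  define g where "g n = (if a dvd n then q ^ n else 0)" for n
  have gs: "g sums (1 / (1 - q ^ a))" unfolding g_def by (rule geom_mult_sums[OF assms(5,4)])
  have gn: "summable (\<lambda>n. norm (g n))"
  proof (rule summable_comparison_test)
    show "\<exists>N. \<forall>n\<ge>N. norm (norm (g n)) \<le> norm q ^ n"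
      by (auto simp: g_def norm_power)
    show "summable (\<lambda>n. norm q ^ n)" using assms(5) by (simp add: summable_geometric)
  qed
  have an: "summable (\<lambda>n. norm (of_nat (pA A n) * q ^ n))"
    using ns by (simp add: norm_mult norm_power)
  have cp: "(\<lambda>n. \<Sum>i\<le>n. (of_nat (pA A i) * q ^ i) * g (n - i)) sums
        ((\<Sum>n. of_nat (pA A n) * q ^ n) * (\<Sum>n. g n))"
    by (rule Cauchy_product_sums[OF an gn])
  have eq: "(\<Sum>i\<le>n. (of_nat (pA A i) * q ^ i) * g (n - i)) = of_nat (pA (insert a A) n) * q ^ n" for n
  proof -
    have "(\<Sum>i\<le>n. (of_nat (pA A i) * q ^ i) * g (n - i)) =
          (\<Sum>i\<le>n. if a dvd (n - i) then of_nat (pA A i) * q ^ n else 0)"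
    proof (rule sum.cong)
      fix i assume "i \<in> {..n}"
      then have "q ^ i * q ^ (n - i) = q ^ n" by (simp add: power_add[symmetric])
      then show "(of_nat (pA A i) * q ^ i) * g (n - i) = (if a dvd (n - i) then of_nat (pA A i) * q ^ n else 0)"
        by (auto simp: g_def mult.assoc)
    qed simp
    also have "\<dots> = (\<Sum>i\<in>{i\<in>{..n}. a dvd (n - i)}. of_nat (pA A i) * q ^ n)"
      by (rule sum.inter_filter[symmetric]) simp
    also have "\<dots> = (\<Sum>j\<le>n div a. of_nat (pA A (n - j * a)) * q ^ n)"
    proof (rule sum.reindex_bij_witness[where i="\<lambda>j. n - j * a" and j="\<lambda>i. (n - i) div a"])
      fix j assume "j \<in> {..n div a}"
      then have "j * a \<le> n" using assms(4) by (simp add: less_eq_div_iff_mult_less_eq)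
      then show "(n - (n - j * a)) div a = j" "n - j * a \<in> {i \<in> {..n}. a dvd n - i}"
        using assms(4) by auto
    next
      fix i assume i: "i \<in> {i \<in> {..n}. a dvd n - i}"
      then show "n - (n - i) div a * a = i" by auto
      show "(n - i) div a \<in> {..n div a}" by (simp add: div_le_mono)
    qed simp
    also have "\<dots> = of_nat (pA (insert a A) n) * q ^ n"
      by (simp add: pA_insert[OF assms(1-4)] sum_distrib_right)
    finally show ?thesis .
  qed
  show ?thesis using cp unfolding eq using s gs by (simp add: sums_iff)
qed

lemma pA_gen_both:
  assumes "finite A" "0 \<notin> A"
  shows "(\<forall>q::complex. norm q < 1 \<longrightarrow> (\<lambda>n. of_nat (pA A n) * q ^ n) sums (\<Prod>m\<in>A. 1 / (1 - q ^ m)))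
       \<and> (\<forall>q::real. norm q < 1 \<longrightarrow> (\<lambda>n. of_nat (pA A n) * q ^ n) sums (\<Prod>m\<in>A. 1 / (1 - q ^ m)))"
  using assms
proof (induction A rule: finite_induct)
  case empty
  have "pA {} n = (if n = 0 then 1 else 0)" for n
  proof -
    have "{M. set_mset M \<subseteq> {} \<and> sum_mset M = n} = (if n = 0 then {{#}} else {})" by auto
    then show ?thesis unfolding pA_def by simp
  qed
  then have "(\<lambda>n. of_nat (pA {} n) * (q::complex) ^ n) = (\<lambda>n. if n = 0 then 1 else 0)"
     "(\<lambda>n. of_nat (pA {} n) * (x::real) ^ n) = (\<lambda>n. if n = 0 then 1 else 0)" for q x
    by auto
  then show ?case
    using sums_single[of 0 "\<lambda>_. 1::complex"] sums_single[of 0 "\<lambda>_. 1::real"] by simp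
next
  case (insert a A)
  have a0: "0 < a" "0 \<notin> A" using insert.prems by auto
  note IH = insert.IH[OF a0(2)]
  have nsum: "summable (\<lambda>n. real (pA A n) * norm q ^ n)" if "norm (q::'c::real_normed_field) < 1" for q
  proof -
    have "norm (norm q) < 1" using that by simp
    then show ?thesis using IH by (auto simp: sums_iff)
  qed
  show ?case
  proof (intro conjI allI impI)
    fix q :: complex assume q: "norm q < 1"
    from pA_step[OF insert.hyps(1) a0(2) insert.hyps(2) a0(1) q _ nsum[OF q]] IH q
    show "(\<lambda>n. of_nat (pA (insert a A) n) * q ^ n) sums (\<Prod>m\<in>insert a A. 1 / (1 - q ^ m))"
      by (simp add: prod.insert[OF insert.hyps(1,2)] mult.commute)
  next
    fix q :: real assume q: "norm q < 1"
    from pA_step[OF insert.hyps(1) a0(2) insert.hyps(2) a0(1) q _ nsum[OF q]] IH q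
    show "(\<lambda>n. of_nat (pA (insert a A) n) * q ^ n) sums (\<Prod>m\<in>insert a A. 1 / (1 - q ^ m))"
      by (simp add: prod.insert[OF insert.hyps(1,2)] mult.commute)
  qed
qed

definition AN :: "nat \<Rightarrow> nat \<Rightarrow> nat set" where
  "AN k N = {m. 1 \<le> m \<and> m \<le> N \<and> \<not> k dvd m}"

definition PS :: "nat \<Rightarrow> nat \<Rightarrow> nat multiset set" where
  "PS k n = {M \<in> partitions n. k_indivisible k M}"

definition pS :: "nat \<Rightarrow> nat \<Rightarrow> nat" where
  "pS k n = card (PS k n)"

lemma finite_AN: "finite (AN k N)" unfolding AN_def by auto
lemma zero_notin_AN: "0 \<notin> AN k N" unfolding AN_def by auto

lemma AN_sub_PS: "{M. set_mset M \<subseteq> AN k N \<and> sum_mset M = n} \<subseteq> PS k n"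
  unfolding AN_def PS_def partitions_def k_indivisible_def by auto

lemma PS_eq_AN: assumes "n \<le> N" shows "PS k n = {M. set_mset M \<subseteq> AN k N \<and> sum_mset M = n}"
proof
  show "PS k n \<subseteq> {M. set_mset M \<subseteq> AN k N \<and> sum_mset M = n}"
  proof
    fix M assume "M \<in> PS k n"
    then have M: "\<forall>x\<in>#M. 0 < x" "sum_mset M = n" "\<forall>x\<in>#M. \<not> k dvd x"
      unfolding PS_def partitions_def k_indivisible_def by auto
    have "x \<le> N" if "x \<in># M" for x using mem_le_sum_mset[OF that] M(2) assms by simp
    then show "M \<in> {M. set_mset M \<subseteq> AN k N \<and> sum_mset M = n}"
      using M unfolding AN_def by (auto simp: Suc_le_eq)
  qed
qed (rule AN_sub_PS)

lemma finite_PS: "finite (PS k n)"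
  using PS_eq_AN[of n n k] finite_msets_sum[OF zero_notin_AN] by simp

lemma pA_AN_le: "pA (AN k N) n \<le> pS k n"
  unfolding pA_def pS_def by (rule card_mono[OF finite_PS AN_sub_PS])

lemma pA_AN_eq: "n \<le> N \<Longrightarrow> pA (AN k N) n = pS k n"
  unfolding pA_def pS_def using PS_eq_AN by simp

lemma one_minus_pow_nz:
  fixes q :: "'a::real_normed_field"
  assumes "norm q < 1" "0 < m" shows "1 - q ^ m \<noteq> 0"
proof
  assume "1 - q ^ m = 0"
  then have "q ^ m = 1" by simp
  then have "norm (q ^ m) = 1" by simp
  moreover have "norm (q ^ m) < 1" using assms by (simp add: norm_power power_less_one_iff)
  ultimately show False by simp
qed

lemma prod_AN:
  fixes q :: complex
  assumes "norm q < 1" "0 < k"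
  shows "(\<Prod>m\<in>AN k N. 1 / (1 - q ^ m)) =
         (\<Prod>j<N div k. 1 - q ^ k * (q ^ k) ^ j) / (\<Prod>i<N. 1 - q * q ^ i)"
proof -
  define B where "B = {m \<in> {1..N}. k dvd m}"
  have split: "{1..N} = AN k N \<union> B" "AN k N \<inter> B = {}"
    unfolding AN_def B_def by auto
  have "(\<Prod>i<N. 1 - q * q ^ i) = (\<Prod>m\<in>{1..N}. 1 - q ^ m)"
    by (simp add: prod.atLeast1_atMost_eq)
  also have "\<dots> = (\<Prod>m\<in>AN k N. 1 - q ^ m) * (\<Prod>m\<in>B. 1 - q ^ m)"
    unfolding split(1) by (rule prod.union_disjoint) (use split finite_AN in \<open>auto simp: B_def\<close>)
  also have "(\<Prod>m\<in>B. 1 - q ^ m) = (\<Prod>j<N div k. 1 - q ^ k * (q ^ k) ^ j)"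
  proof (rule prod.reindex_bij_witness[where i="\<lambda>j. k * (j + 1)" and j="\<lambda>m. m div k - 1"])
    fix m assume "m \<in> B"
    then obtain c where c: "m = k * c" "1 \<le> c" "k * c \<le> N" unfolding B_def
      by (auto simp: dvd_def)
    have md: "m div k = c" using c(1) assms(2) by simp
    show "k * (m div k - 1 + 1) = m" using c(1,2) md by simp
    have "c \<le> N div k" using c(3) assms(2) by (simp add: less_eq_div_iff_mult_less_eq mult.commute)
    then show "m div k - 1 \<in> {..<N div k}" using md c(2) by simp
    have "q ^ k * (q ^ k) ^ (c - 1) = q ^ (k * (1 + (c - 1)))"
      by (simp only: power_mult power_add power_one_right distrib_left mult_1_right)
    also have "\<dots> = q ^ m" using c(1,2) by simp
    finally show "1 - q ^ k * (q ^ k) ^ (m div k - 1) = 1 - q ^ m" using md by simp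
  next
    fix j assume j: "j \<in> {..<N div k}"
    show "k * (j + 1) div k - 1 = j" using assms(2) by simp
    have "(j + 1) * k \<le> N" using j assms(2) by (simp add: less_eq_div_iff_mult_less_eq flip: Suc_le_eq)
    then show "k * (j + 1) \<in> B" unfolding B_def using assms(2) by (auto simp: mult.commute)
  qed
  finally have den: "(\<Prod>i<N. 1 - q * q ^ i) =
       (\<Prod>m\<in>AN k N. 1 - q ^ m) * (\<Prod>j<N div k. 1 - q ^ k * (q ^ k) ^ j)" .
  have nz: "(\<Prod>m\<in>AN k N. 1 - q ^ m) \<noteq> 0"
    using one_minus_pow_nz[OF assms(1)] finite_AN by (auto simp: AN_def prod_zero_iff)
  have nz2: "(\<Prod>j<N div k. 1 - q ^ k * (q ^ k) ^ j) \<noteq> 0"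
    using one_minus_pow_nz[OF assms(1), of "k + k * j" for j] assms(2)
    by (auto simp: prod_zero_iff simp flip: power_mult power_add)
  show ?thesis unfolding den using nz nz2 by (simp add: prod_dividef)
qed

lemma conv_qp:
  fixes w :: complex assumes "norm w < 1"
  shows "convergent_prod (\<lambda>n. 1 - w * w ^ n)"
proof (rule abs_convergent_prod_imp_convergent_prod)
  have "summable (\<lambda>n. norm w * norm w ^ n)"
    using assms by (intro summable_mult summable_geometric) simp
  then show "abs_convergent_prod (\<lambda>n. 1 - w * w ^ n)"
    unfolding abs_convergent_prod_conv_summable by (simp add: norm_mult norm_power)
qed

lemma qp_lim:
  fixes w :: complex assumes "norm w < 1"
  shows "(\<lambda>N. \<Prod>i<N. 1 - w * w ^ i) \<longlonglongrightarrow> qpoch_inf w w"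
  unfolding qpoch_inf_def LIMSEQ_lessThan_iff_atMost[where f="\<lambda>A. \<Prod>i\<in>A. 1 - w * w ^ i"]
  by (rule convergent_prod_LIMSEQ[OF conv_qp[OF assms]])

lemma qp_nz:
  fixes w :: complex assumes "norm w < 1"
  shows "qpoch_inf w w \<noteq> 0"
  unfolding qpoch_inf_def
proof (rule prodinf_nonzero[OF conv_qp[OF assms]])
  fix i show "1 - w * w ^ i \<noteq> 0"
    using one_minus_pow_nz[OF assms, of "Suc i"] by simp
qed

lemma F_lim:
  fixes q :: complex assumes "norm q < 1" "0 < k"
  shows "(\<lambda>N. \<Prod>m\<in>AN k N. 1 / (1 - q ^ m)) \<longlonglongrightarrow> qpoch_inf (q ^ k) (q ^ k) / qpoch_inf q q"
proof -
  have nk: "norm (q ^ k) < 1" using assms by (simp add: norm_power power_less_one_iff)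
  have num: "(\<lambda>N. \<Prod>j<N div k. 1 - q ^ k * (q ^ k) ^ j) \<longlonglongrightarrow> qpoch_inf (q ^ k) (q ^ k)"
    using filterlim_compose[OF qp_lim[OF nk] filterlim_at_top_div_const_nat[OF assms(2)]]
    by (simp add: o_def)
  have "(\<lambda>N. (\<Prod>j<N div k. 1 - q ^ k * (q ^ k) ^ j) / (\<Prod>i<N. 1 - q * q ^ i))
        \<longlonglongrightarrow> qpoch_inf (q ^ k) (q ^ k) / qpoch_inf q q"
    by (rule tendsto_divide[OF num qp_lim[OF assms(1)] qp_nz[OF assms(1)]])
  then show ?thesis by (simp add: prod_AN[OF assms])
qed

lemma pS_gen:
  fixes q :: complex assumes q: "norm q < 1" and k: "0 < k"
  shows "summable (\<lambda>n. real (pS k n) * norm q ^ n)"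
    and "(\<lambda>n. of_nat (pS k n) * q ^ n) sums (qpoch_inf (q ^ k) (q ^ k) / qpoch_inf q q)"
proof -
  define x where "x = norm q"
  have x: "0 \<le> x" "x < 1" using q by (auto simp: x_def)
  define R where "R N = (\<Prod>m\<in>AN k N. 1 / (1 - x ^ m))" for N
  have Rs: "(\<lambda>n. real (pA (AN k N) n) * x ^ n) sums R N" for N
    using pA_gen_both[OF finite_AN zero_notin_AN] x unfolding R_def by auto
  have "(\<lambda>N. \<Prod>m\<in>AN k N. 1 / (1 - (complex_of_real x) ^ m)) \<longlonglongrightarrow>
      qpoch_inf (complex_of_real x ^ k) (complex_of_real x ^ k) / qpoch_inf (complex_of_real x) (complex_of_real x)"
    by (rule F_lim) (use x k in auto)
  then have "Bseq (\<lambda>N. \<Prod>m\<in>AN k N. 1 / (1 - (complex_of_real x) ^ m))"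
    by (rule convergent_imp_Bseq[OF convergentI])
  then obtain K where K: "\<And>N. norm (\<Prod>m\<in>AN k N. 1 / (1 - (complex_of_real x) ^ m)) \<le> K"
    unfolding Bseq_def by auto
  have RK: "R N \<le> K" for N
  proof -
    have "complex_of_real (R N) = (\<Prod>m\<in>AN k N. 1 / (1 - (complex_of_real x) ^ m))"
      unfolding R_def by simp
    then have "norm (complex_of_real (R N)) \<le> K" using K by metis
    then show ?thesis by simp
  qed
  show sm: "summable (\<lambda>n. real (pS k n) * norm q ^ n)"
  proof (rule summableI_nonneg_bounded[where x=K])
    fix N
    have "(\<Sum>i<N. real (pS k i) * norm q ^ i) = (\<Sum>i<N. real (pA (AN k N) i) * x ^ i)"
      by (intro sum.cong) (auto simp: pA_AN_eq x_def)
    also have "\<dots> \<le> R N"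
      using sum_le_suminf[of "\<lambda>i. real (pA (AN k N) i) * x ^ i" "{..<N}"] Rs[of N] x
      by (auto simp: sums_iff)
    also have "\<dots> \<le> K" by (rule RK)
    finally show "(\<Sum>i<N. real (pS k i) * norm q ^ i) \<le> K" .
  qed simp
  have T: "(\<lambda>N. \<Sum>n. of_nat (pA (AN k N) n) * q ^ n) \<longlonglongrightarrow> (\<Sum>n. of_nat (pS k n) * q ^ n)"
  proof (rule tannerys_theorem[where M="\<lambda>n. real (pS k n) * norm q ^ n", THEN conjunct2, THEN conjunct2])
    fix n
    show "(\<lambda>N. of_nat (pA (AN k N) n) * q ^ n) \<longlonglongrightarrow> of_nat (pS k n) * q ^ n"
    proof (rule tendsto_eventually)
      show "\<forall>\<^sub>F N in sequentially. of_nat (pA (AN k N) n) * q ^ n = of_nat (pS k n) * q ^ n"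
        using eventually_ge_at_top[of n] by eventually_elim (simp add: pA_AN_eq)
    qed
  next
    show "\<forall>\<^sub>F (n, N) in sequentially \<times>\<^sub>F sequentially.
            norm (of_nat (pA (AN k N) n) * q ^ n) \<le> real (pS k n) * norm q ^ n"
      by (intro always_eventually allI) (auto simp: norm_mult norm_power intro!: mult_right_mono pA_AN_le)
  qed (use sm in auto)
  have "(\<lambda>N. \<Sum>n. of_nat (pA (AN k N) n) * q ^ n) = (\<lambda>N. \<Prod>m\<in>AN k N. 1 / (1 - q ^ m))"
    using pA_gen_both[OF finite_AN zero_notin_AN] q by (auto simp: sums_iff)
  with T F_lim[OF q k] have eq: "(\<Sum>n. of_nat (pS k n) * q ^ n) = qpoch_inf (q ^ k) (q ^ k) / qpoch_inf q q"
    using LIMSEQ_unique by metis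
  have "summable (\<lambda>n. of_nat (pS k n) * q ^ n)"
    by (rule summable_norm_cancel) (use sm in \<open>simp add: norm_mult norm_power\<close>)
  then show "(\<lambda>n. of_nat (pS k n) * q ^ n) sums (qpoch_inf (q ^ k) (q ^ k) / qpoch_inf q q)"
    using eq by (simp add: sums_iff)
qed

lemma lam_term_bound:
  fixes q :: complex assumes "norm q < 1" "0 < m"
  shows "norm (q ^ m / (1 - q ^ m)) \<le> norm q ^ m / (1 - norm q)"
proof -
  have x: "norm q ^ m \<le> norm q" using assms by (simp add: power_le_one_iff power_decreasing[of 1 m, simplified])
  have "1 - norm q ^ m \<le> norm (1 - q ^ m)"
    using norm_triangle_ineq2[of 1 "q ^ m"] by (simp add: norm_power)
  moreover have "0 < 1 - norm q" using assms by simp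
  ultimately have "1 - norm q \<le> norm (1 - q ^ m)" using x by linarith
  then have "norm q ^ m / norm (1 - q ^ m) \<le> norm q ^ m / (1 - norm q)"
    using \<open>0 < 1 - norm q\<close> \<open>1 - norm q \<le> norm (1 - q ^ m)\<close>
    by (intro divide_left_mono mult_pos_pos) auto
  then show ?thesis by (simp add: norm_divide norm_power)
qed

lemma lam_summable:
  fixes q :: complex assumes "norm q < 1" "\<And>m. P m \<Longrightarrow> 0 < m"
  shows "summable (\<lambda>m. if P m then q ^ m / (1 - q ^ m) else 0)"
proof (rule summable_comparison_test)
  show "\<exists>N. \<forall>n\<ge>N. norm (if P n then q ^ n / (1 - q ^ n) else 0) \<le> norm q ^ n / (1 - norm q)"
    using lam_term_bound[OF assms(1)] assms(2) assms(1) by (auto intro!: exI[of _ 0])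
  show "summable (\<lambda>n. norm q ^ n / (1 - norm q))"
    using assms(1) by (intro summable_divide summable_geometric) simp
qed

lemma lambert:
  fixes q :: complex and T :: "nat set"
  assumes q: "norm q < 1" and T: "0 \<notin> T"
  defines "c \<equiv> \<lambda>l. card {m \<in> T. m dvd l \<and> l \<noteq> 0}"
  shows "summable (\<lambda>l. norm (of_nat (c l) * q ^ l))"
    and "(\<lambda>l. of_nat (c l) * q ^ l) sums (\<Sum>m. if m \<in> T then q ^ m / (1 - q ^ m) else 0)"
proof -
  define x where "x = norm q"
  have x: "0 \<le> x" "x < 1" using q by (auto simp: x_def)
  define f where "f = (\<lambda>(m, j). q ^ (m * (j + 1)))"
  have gsum: "(\<lambda>j. w ^ (m * (j + 1))) sums (w ^ m / (1 - w ^ m))"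
    if "norm w < 1" "0 < m" for w :: "'a::{real_normed_field,banach}" and m
  proof -
    have "norm (w ^ m) < 1" using that by (simp add: norm_power power_less_one_iff)
    from sums_mult[OF geometric_sums[OF this], of "w ^ m"]
    moreover have "(\<lambda>j. w ^ (m * (j + 1))) = (\<lambda>j. w ^ m * (w ^ m) ^ j)"
      by (simp add: fun_eq_iff distrib_left add.commute flip: power_mult power_add)
    ultimately show ?thesis by simp
  qed
  have abs: "(\<lambda>p. norm (f p)) summable_on Sigma T (\<lambda>_. UNIV)"
  proof (rule summable_on_SigmaI[where g="\<lambda>m. x ^ m / (1 - x ^ m)"])
    fix m assume m: "m \<in> T"
    then have "0 < m" using T by (cases m) auto
    have "(\<lambda>j. x ^ (m * (j + 1))) sums (x ^ m / (1 - x ^ m))" by (rule gsum) (use x \<open>0 < m\<close> in auto)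
    then have "((\<lambda>j. x ^ (m * (j + 1))) has_sum (x ^ m / (1 - x ^ m))) UNIV"
      by (rule sums_nonneg_imp_has_sum) (use x in simp)
    then show "((\<lambda>j. norm (f (m, j))) has_sum (x ^ m / (1 - x ^ m))) UNIV"
      by (simp add: f_def x_def norm_power)
  next
    have "(\<lambda>m. x ^ m / (1 - x)) summable_on UNIV"
      using x by (intro norm_summable_imp_summable_on summable_divide summable_geometric) auto
    then have s1: "(\<lambda>m. x ^ m / (1 - x)) summable_on T" by (rule summable_on_subset_banach) simp
    show "(\<lambda>m. x ^ m / (1 - x ^ m)) summable_on T"
    proof (rule summable_on_comparison_test[OF s1])
      fix m assume "m \<in> T"
      then have "0 < m" using T by (cases m) auto
      have "x ^ m \<le> x" using x \<open>0 < m\<close> by (simp add: power_le_one_iff power_decreasing[of 1 m, simplified])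
      moreover have "x ^ m < 1" using x \<open>0<m\<close> by (simp add: power_less_one_iff)
      ultimately show "x ^ m / (1 - x ^ m) \<le> x ^ m / (1 - x)" using x
        by (intro divide_left_mono) auto
      show "0 \<le> x ^ m / (1 - x ^ m)" using \<open>x ^ m < 1\<close> x by simp
    qed
  qed (simp add: f_def)
  then have fs: "(f has_sum (infsum f (Sigma T (\<lambda>_. UNIV)))) (Sigma T (\<lambda>_. UNIV))"
    by (intro has_sum_infsum) (rule abs_summable_summable)
  define S where "S = infsum f (Sigma T (\<lambda>_. UNIV))"
  have "((\<lambda>m. q ^ m / (1 - q ^ m)) has_sum S) T"
  proof (rule has_sum_Sigma'[OF fs[folded S_def]])
    fix m assume "m \<in> T"
    then have "0 < m" using T by (cases m) auto
    have "(\<lambda>j. q ^ (m * (j + 1))) sums (q ^ m / (1 - q ^ m))" by (rule gsum) (use q \<open>0 < m\<close> in auto)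
    moreover have "summable (\<lambda>j. norm (q ^ (m * (j + 1))))"
      using gsum[of "norm q" m] q \<open>0 < m\<close> by (simp add: norm_power sums_iff)
    ultimately have "((\<lambda>j. q ^ (m * (j + 1))) has_sum (q ^ m / (1 - q ^ m))) UNIV"
      by (intro norm_summable_imp_has_sum)
    then show "((\<lambda>j. f (m, j)) has_sum (q ^ m / (1 - q ^ m))) UNIV"
      unfolding f_def by simp
  qed
  moreover have "((\<lambda>m. if m \<in> T then q ^ m / (1 - q ^ m) else 0) has_sum S) UNIV
     \<longleftrightarrow> ((\<lambda>m. q ^ m / (1 - q ^ m)) has_sum S) T"
    by (rule has_sum_cong_neutral) auto
  ultimately have "((\<lambda>m. if m \<in> T then q ^ m / (1 - q ^ m) else 0) has_sum S) UNIV"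
    by simp
  then have "(\<lambda>m. if m \<in> T then q ^ m / (1 - q ^ m) else 0) sums S"
    by (rule has_sum_imp_sums)
  then have S1: "(\<Sum>m. if m \<in> T then q ^ m / (1 - q ^ m) else 0) = S"
    by (rule sums_unique[symmetric])
  define B where "B l = {m \<in> T. m dvd l \<and> l \<noteq> 0}" for l
  have finB: "finite (B l)" for l
    by (rule finite_subset[of _ "{..l}"]) (auto simp: B_def dest: dvd_imp_le)
  have bij: "(f has_sum S) (Sigma T (\<lambda>_. UNIV)) = ((\<lambda>(l, m). q ^ l) has_sum S) (Sigma UNIV B)"
  proof (rule has_sum_reindex_bij_witness[where j="\<lambda>(m, j). (m * (j + 1), m)" and i="\<lambda>(l, m). (m, l div m - 1)"])
    fix a :: "nat \<times> nat" assume "a \<in> Sigma T (\<lambda>_. UNIV)"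
    then obtain m jj where a: "a = (m, jj)" "m \<in> T" by auto
    then have "0 < m" using T by (cases m) auto
    then show "(\<lambda>(l, m). (m, l div m - 1)) ((\<lambda>(m, j). (m * (j + 1), m)) a) = a" using a by simp
    show "(\<lambda>(m, j). (m * (j + 1), m)) a \<in> Sigma UNIV B" using a \<open>0<m\<close> by (auto simp: B_def)
    show "(\<lambda>(l, m). q ^ l) ((\<lambda>(m, j). (m * (j + 1), m)) a) = f a" using a by (simp add: f_def)
  next
    fix b :: "nat \<times> nat" assume "b \<in> Sigma UNIV B"
    then obtain l m where b: "b = (l, m)" "m \<in> T" "m dvd l" "l \<noteq> 0" by (auto simp: B_def)
    then have "0 < m" using T by (cases m) auto
    obtain c where c: "l = m * c" using b by (auto simp: dvd_def)
    then have "c \<noteq> 0" using b by auto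
    show "(\<lambda>(m, j). (m * (j + 1), m)) ((\<lambda>(l, m). (m, l div m - 1)) b) = b"
      using b c \<open>0<m\<close> \<open>c\<noteq>0\<close> by (simp add: right_diff_distrib')
    show "(\<lambda>(l, m). (m, l div m - 1)) b \<in> Sigma T (\<lambda>_. UNIV)" using b by simp
  qed simp
  have fs2: "((\<lambda>(l, m). q ^ l) has_sum S) (Sigma UNIV B)"
    using bij fs unfolding S_def by simp
  have hs: "((\<lambda>l. of_nat (c l) * q ^ l) has_sum S) UNIV"
  proof (rule has_sum_Sigma'[OF fs2])
    fix l
    show "((\<lambda>m. (\<lambda>(l, m). q ^ l) (l, m)) has_sum (of_nat (c l) * q ^ l)) (B l)"
      by (rule has_sum_finiteI[OF finB]) (simp add: c_def B_def)
  qed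
  then show "(\<lambda>l. of_nat (c l) * q ^ l) sums (\<Sum>m. if m \<in> T then q ^ m / (1 - q ^ m) else 0)"
    unfolding S1 by (rule has_sum_imp_sums)
  have "(\<lambda>l. of_nat (c l) * q ^ l) summable_on UNIV" using hs by (rule has_sum_imp_summable)
  note this[unfolded summable_on_iff_abs_summable_on_complex]
  then show "summable (\<lambda>l. norm (of_nat (c l) * q ^ l))"
    by (rule summable_on_imp_summable)
qed

lemma size_sum_count:
  assumes "finite B" "set_mset M \<subseteq> B"
  shows "size M = (\<Sum>x\<in>B. count M x)"
  using assms(2)
proof (induction M)
  case empty then show ?case by simp
next
  case (add a M)
  have aB: "a \<in> B" using add.prems by simp
  have "(\<Sum>x\<in>B. count (add_mset a M) x) = (\<Sum>x\<in>B. count M x + (if x = a then 1 else 0))"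
    by (intro sum.cong) auto
  also have "\<dots> = (\<Sum>x\<in>B. count M x) + 1"
    using aB assms(1) by (simp add: sum.distrib)
  finally show ?case using add by simp
qed

definition TT :: "nat \<Rightarrow> nat \<Rightarrow> nat \<Rightarrow> nat set" where
  "TT k r t = {m. 1 \<le> m \<and> \<not> k dvd m \<and> [m = r] (mod t)}"

definition cc :: "nat \<Rightarrow> nat \<Rightarrow> nat \<Rightarrow> nat \<Rightarrow> nat" where
  "cc k r t l = card {m \<in> TT k r t. m dvd l \<and> l \<noteq> 0}"

lemma Dx_conv: "Dx k r t n = (\<Sum>i\<le>n. pS k i * cc k r t (n - i))"
proof -
  define Tn where "Tn = {m \<in> {1..n}. [m = r] (mod t)}"
  define C where "C l = {m \<in> TT k r t. m dvd l \<and> l \<noteq> 0}" for l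
  have finC: "finite (C l)" for l
    by (rule finite_subset[of _ "{..l}"]) (auto simp: C_def dest: dvd_imp_le)
  define X where "X = Sigma (PS k n) (\<lambda>M. Sigma Tn (\<lambda>m. {1..count M m}))"
  define Y where "Y = Sigma {..n} (\<lambda>i. PS k i \<times> C (n - i))"
  have finTn: "finite Tn" unfolding Tn_def by simp
  define phi where "phi = (\<lambda>(M, m, j). (n - j * m, M - replicate_mset j m, m))"
  define psi where "psi = (\<lambda>(i, N, m). (N + replicate_mset ((n - i) div m) m, m, (n - i) div m))"
  have H1: "psi (phi a) = a \<and> phi a \<in> Y" if "a \<in> X" for a
  proof -
    from that obtain M m j where a: "a = (M, m, j)" "M \<in> PS k n" "m \<in> Tn" "1 \<le> j" "j \<le> count M m"
      unfolding X_def by auto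
    have m1: "1 \<le> m" and mr: "[m = r] (mod t)" using a(3) unfolding Tn_def by auto
    have Mp: "\<forall>x\<in>#M. 0 < x" "sum_mset M = n" "\<forall>x\<in>#M. \<not> k dvd x"
      using a(2) unfolding PS_def partitions_def k_indivisible_def by auto
    define N where "N = M - replicate_mset j m"
    have sub: "replicate_mset j m \<subseteq># M" using count_le_replicate_mset_subset_eq[THEN iffD1, OF a(5)] .
    have MN: "M = N + replicate_mset j m" unfolding N_def by (rule subset_mset.diff_add[OF sub, symmetric])
    have "sum_mset M = sum_mset N + j * m" by (subst MN) simp
    then have sN: "sum_mset N + j * m = n" using Mp(2) by simp
    have setN: "set_mset N \<subseteq> set_mset M" unfolding N_def by (auto dest: in_diffD)
    have mM: "m \<in># M"
    proof (rule ccontr)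
      assume "m \<notin># M"
      then have "count M m = 0" by (simp add: not_in_iff)
      with a(4,5) show False by simp
    qed
    have jm: "j * m \<le> n" using sN by simp
    have d: "(n - (n - j * m)) div m = j" using jm m1 by simp
    have "psi (phi a) = a" unfolding phi_def psi_def a(1) using d by (simp add: subset_mset.diff_add[OF sub])
    moreover have "N \<in> PS k (n - j * m)"
      unfolding PS_def partitions_def k_indivisible_def using Mp setN sN by auto
    moreover have "m \<in> C (n - (n - j * m))"
      unfolding C_def TT_def using m1 mr Mp(3) mM jm a(4) by auto
    ultimately show ?thesis unfolding phi_def a(1) Y_def N_def by auto
  qed
  have H2: "phi (psi b) = b \<and> psi b \<in> X" if "b \<in> Y" for b
  proof -
    from that obtain i N m where b: "b = (i, N, m)" "i \<le> n" "N \<in> PS k i" "m \<in> C (n - i)"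
      unfolding Y_def by auto
    have m: "1 \<le> m" "\<not> k dvd m" "[m = r] (mod t)" "m dvd (n - i)" "n - i \<noteq> 0"
      using b(4) unfolding C_def TT_def by auto
    have Np: "\<forall>x\<in>#N. 0 < x" "sum_mset N = i" "\<forall>x\<in>#N. \<not> k dvd x"
      using b(3) unfolding PS_def partitions_def k_indivisible_def by auto
    define d where "d = (n - i) div m"
    have dm: "d * m = n - i" unfolding d_def using m(4) by simp
    have d1: "1 \<le> d" using dm m(5) by (cases d) auto
    have mn: "m \<le> n" using dvd_imp_le[OF m(4)] m(5) by simp
    have dm': "(n - i) div m * m = n - i" using dm unfolding d_def .
    have "phi (psi b) = b" unfolding phi_def psi_def b(1) using b(2) by (simp add: dm')
    moreover have "N + replicate_mset d m \<in> PS k n"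
      unfolding PS_def partitions_def k_indivisible_def using Np m dm b(2) by auto
    moreover have "m \<in> Tn" unfolding Tn_def using m mn by auto
    moreover have "d \<le> count (N + replicate_mset d m) m" by simp
    moreover have "psi b = (N + replicate_mset d m, m, d)" unfolding psi_def b(1) d_def by simp
    ultimately show ?thesis unfolding X_def using d1 by auto
  qed
  have "bij_betw phi X Y"
    by (rule bij_betw_byWitness[where f'=psi]) (use H1 H2 in auto)
  then have cXY: "card X = card Y" by (rule bij_betw_same_card)
  have "Dx k r t n = (\<Sum>M\<in>PS k n. size (filter_mset (\<lambda>x. [x = r] (mod t)) M))"
    unfolding Dx_def PS_def ..
  also have "\<dots> = (\<Sum>M\<in>PS k n. \<Sum>m\<in>Tn. count M m)"
  proof (rule sum.cong)
    fix M assume M: "M \<in> PS k n"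
    then have "set_mset M \<subseteq> {1..n}"
      unfolding PS_def partitions_def using mem_le_sum_mset by (auto simp: Suc_le_eq)
    then have "set_mset (filter_mset (\<lambda>x. [x = r] (mod t)) M) \<subseteq> {1..n}" by auto
    then have "size (filter_mset (\<lambda>x. [x = r] (mod t)) M) =
        (\<Sum>x\<in>{1..n}. count (filter_mset (\<lambda>x. [x = r] (mod t)) M) x)"
      by (rule size_sum_count[rotated]) simp
    also have "\<dots> = (\<Sum>x\<in>{1..n}. if [x = r] (mod t) then count M x else 0)"
      by (intro sum.cong) auto
    also have "\<dots> = (\<Sum>m\<in>Tn. count M m)"
      unfolding Tn_def by (rule sum.inter_filter[symmetric]) simp
    finally show "size (filter_mset (\<lambda>x. [x = r] (mod t)) M) = (\<Sum>m\<in>Tn. count M m)" .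
  qed simp
  also have "\<dots> = card X"
    unfolding X_def using finite_PS finTn by (simp add: card_SigmaI)
  also have "card X = card Y" by (rule cXY)
  also have "card Y = (\<Sum>i\<le>n. pS k i * cc k r t (n - i))"
    unfolding Y_def using finite_PS finC
    by (simp add: card_SigmaI card_cartesian_product pS_def cc_def C_def)
  finally show ?thesis .
qed

theorem lemma3p1:
  fixes k t r :: nat and q :: complex
  assumes "k \<ge> 2" and "t \<ge> 2" and "1 \<le> r" and "r \<le> t" and "norm q < 1"
  shows "(\<lambda>n. of_nat (Dx k r t n) * q ^ n) sums
           (qpoch_inf (q ^ k) (q ^ k) / qpoch_inf q q *
            (\<Sum>m. if 1 \<le> m \<and> \<not> k dvd m \<and> [m = r] (mod t)
                   then q ^ m / (1 - q ^ m) else 0)) \<and>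
         (coprime k t \<longrightarrow> (\<forall>rb. 1 \<le> rb \<and> rb \<le> t \<and> [rb * k = r] (mod t) \<longrightarrow>
         (\<lambda>n. of_nat (Dx k r t n) * q ^ n) sums
           (qpoch_inf (q ^ k) (q ^ k) / qpoch_inf q q *
            ((\<Sum>m. if 1 \<le> m \<and> [m = r] (mod t) then q ^ m / (1 - q ^ m) else 0)
             - (\<Sum>m. if 1 \<le> m \<and> [m = rb] (mod t)
                     then q ^ (m * k) / (1 - q ^ (m * k)) else 0)))))"
proof -
  have k0: "0 < k" using assms(1) by simp
  have q: "norm q < 1" by fact
  define P where "P = qpoch_inf (q ^ k) (q ^ k) / qpoch_inf q q"
  define L where "L = (\<Sum>m. if 1 \<le> m \<and> \<not> k dvd m \<and> [m = r] (mod t) then q ^ m / (1 - q ^ m) else 0)"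
  have a1: "summable (\<lambda>n. norm (of_nat (pS k n) * q ^ n))"
    using pS_gen(1)[OF q k0] by (simp add: norm_mult norm_power)
  have a2: "(\<lambda>n. of_nat (pS k n) * q ^ n) sums P" unfolding P_def by (rule pS_gen(2)[OF q k0])
  have T0: "0 \<notin> TT k r t" unfolding TT_def by simp
  have b1: "summable (\<lambda>l. norm (of_nat (cc k r t l) * q ^ l))"
    using lambert(1)[OF q T0] unfolding cc_def .
  have b2: "(\<lambda>l. of_nat (cc k r t l) * q ^ l) sums L"
    using lambert(2)[OF q T0] unfolding cc_def L_def TT_def by simp
  have cp: "(\<lambda>n. \<Sum>i\<le>n. (of_nat (pS k i) * q ^ i) * (of_nat (cc k r t (n - i)) * q ^ (n - i))) sums (P * L)"
    using Cauchy_product_sums[OF a1 b1] a2 b2 by (simp add: sums_iff)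
  have eq: "(\<Sum>i\<le>n. (of_nat (pS k i) * q ^ i) * (of_nat (cc k r t (n - i)) * q ^ (n - i)))
            = of_nat (Dx k r t n) * q ^ n" for n
  proof -
    have "(\<Sum>i\<le>n. (of_nat (pS k i) * q ^ i) * (of_nat (cc k r t (n - i)) * q ^ (n - i)))
        = (\<Sum>i\<le>n. of_nat (pS k i * cc k r t (n - i)) * q ^ n)"
    proof (rule sum.cong)
      fix i assume "i \<in> {..n}"
      then have "q ^ i * q ^ (n - i) = q ^ n" by (simp flip: power_add)
      then show "(of_nat (pS k i) * q ^ i) * (of_nat (cc k r t (n - i)) * q ^ (n - i))
            = of_nat (pS k i * cc k r t (n - i)) * q ^ n"
        by (simp add: algebra_simps)
    qed simp
    also have "\<dots> = of_nat (Dx k r t n) * q ^ n"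
      by (simp add: Dx_conv sum_distrib_right)
    finally show ?thesis .
  qed
  have main: "(\<lambda>n. of_nat (Dx k r t n) * q ^ n) sums (P * L)" using cp unfolding eq .
  have part2: "L = (\<Sum>m. if 1 \<le> m \<and> [m = r] (mod t) then q ^ m / (1 - q ^ m) else 0)
             - (\<Sum>m. if 1 \<le> m \<and> [m = rb] (mod t) then q ^ (m * k) / (1 - q ^ (m * k)) else 0)"
    if cop: "coprime k t" and rb: "[rb * k = r] (mod t)" for rb
  proof -
    define h where "h m = (if 1 \<le> m \<and> k dvd m \<and> [m = r] (mod t) then q ^ m / (1 - q ^ m) else 0)" for m
    have s0: "summable (\<lambda>m. if 1 \<le> m \<and> \<not> k dvd m \<and> [m = r] (mod t) then q ^ m / (1 - q ^ m) else 0)"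
      by (rule lam_summable[OF q]) auto
    have sh: "summable h" unfolding h_def by (rule lam_summable[OF q]) auto
    have split: "(\<lambda>m. if 1 \<le> m \<and> [m = r] (mod t) then q ^ m / (1 - q ^ m) else 0)
        = (\<lambda>m. (if 1 \<le> m \<and> \<not> k dvd m \<and> [m = r] (mod t) then q ^ m / (1 - q ^ m) else 0) + h m)"
      by (auto simp: h_def fun_eq_iff)
    have L1: "(\<Sum>m. if 1 \<le> m \<and> [m = r] (mod t) then q ^ m / (1 - q ^ m) else 0) = L + suminf h"
      unfolding split L_def by (rule suminf_add[OF s0 sh, symmetric])
    have "(\<lambda>j. h (j * k)) sums suminf h"
    proof (subst sums_mono_reindex)
      show "strict_mono (\<lambda>j. j * k)" using k0 by (auto intro: strict_monoI)
      show "h n = 0" if "n \<notin> range (\<lambda>j. j * k)" for n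
        using that by (auto simp: h_def dvd_def mult.commute)
      show "h sums suminf h" using sh by (rule summable_sums)
    qed
    moreover have "(\<lambda>j. h (j * k)) =
        (\<lambda>m. if 1 \<le> m \<and> [m = rb] (mod t) then q ^ (m * k) / (1 - q ^ (m * k)) else 0)"
    proof (rule ext)
      fix j
      have "[j * k = r] (mod t) \<longleftrightarrow> [j * k = rb * k] (mod t)"
        using rb cong_sym cong_trans by blast
      also have "\<dots> \<longleftrightarrow> [j = rb] (mod t)" using cong_mult_rcancel_nat[OF cop] .
      finally have c: "[j * k = r] (mod t) \<longleftrightarrow> [j = rb] (mod t)" .
      have "1 \<le> j * k \<longleftrightarrow> 1 \<le> j" using k0 by (simp add: Suc_le_eq)
      then show "h (j * k) = (if 1 \<le> j \<and> [j = rb] (mod t) then q ^ (j * k) / (1 - q ^ (j * k)) else 0)"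
        unfolding h_def using c by simp
    qed
    ultimately have "(\<Sum>m. if 1 \<le> m \<and> [m = rb] (mod t) then q ^ (m * k) / (1 - q ^ (m * k)) else 0) = suminf h"
      by (simp add: sums_iff)
    then show ?thesis using L1 by simp
  qed
  show ?thesis
    using main part2 unfolding P_def L_def by auto
qed

end
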